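(* There exist constants $\bar x^e,\bar u^e$, independent of $N$ and $W$, such that $\|x^e_t\|\le\bar x^e$ and $\|u^e_t\|\le\bar u^e$ for all $0\le t\le N-1$. Moreover, the states and controls of FOSS satisfy $\|x_t(0)\|\le\sqrt n\,\bar x^e$ for $0\le t\le N$ and $\|u_t(0)\|\le\sqrt n\,\bar u^e$ for $0\le t\le N-1$.
   Context: Setting: $(A,B)$ in canonical form (indices $0=k_0<k_1<\dots<k_m=n$, $\mathcal I=\{k_1,\dots,k_m\}$; rows $i\notin\mathcal I$ of $A$ equal $e_{i+1}^\top$; $j$-th column of $B$ is $e_{k_j}$; $A(\mathcal I,:)$ = rows of $A$ indexed by $\mathcal I$; $x^{\mathcal I}=(x^{k_1},\dots,x^{k_m})^\top$). Dynamics $x_{t+1}=Ax_t+Bu_t$, $x_0=0$. Standing assumptions: $f_t$ $\mu_f$-strongly convex and $l_f$-smooth, $g_t$ convex and $l_g$-smooth, minimizers $\theta_t$ of $f_t$ and $\xi_t$ of $g_t$ satisfy $\|\theta_t\|\le\bar\theta$, $\|\xi_t\|\le\bar\xi$ for all $t$. Optimal steady state $(x^e_t,u^e_t)=\arg\min\{f_t(x)+g_t(u):x=Ax+Bu\}$. FOSS: controller $u_t(0)=z_{t+1}(0)-A(\mathcal I,:)x_t(0)$ with $z_{t+1}(0)=(x^e_t)^{\mathcal I}$, $x_{t+1}(0)=Ax_t(0)+Bu_t(0)$, $x_0(0)=0$. *)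

theory Defs
  imports "HOL-Analysis.Analysis"
begin

text \<open>State space R^n = real^'n, input space R^m = real^'m. The index types are finite
and linearly ordered; this order is the order 1 < 2 < ... < n of coordinates.\<close>

text \<open>Canonical form of (A,B): k enumerates I = {k_1 < ... < k_m} with k_m = n;
rows of A not in I are e_{i+1}^T; the j-th column of B is e_{k_j}.\<close>
definition canonical_form ::
  "real^('n::{finite,linorder})^('n::{finite,linorder}) \<Rightarrow> real^('m::{finite,linorder})^('n::{finite,linorder}) \<Rightarrow> ('m \<Rightarrow> 'n) \<Rightarrow> bool" where
  "canonical_form A B k \<longleftrightarrow>
     strict_mono k \<and> k (Max UNIV) = Max UNIV \<and>
     (\<forall>i. i \<notin> range k \<longrightarrow> A $ i = axis (LEAST j. i < j) 1) \<and>
     (\<forall>j. column j B = axis (k j) 1)"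

definition rows_I :: "real^'n^'n \<Rightarrow> ('m \<Rightarrow> 'n) \<Rightarrow> real^'n^'m" where
  "rows_I A k = (\<chi> j. A $ k j)"

definition sel_I :: "real^'n \<Rightarrow> ('m \<Rightarrow> 'n) \<Rightarrow> real^'m" where
  "sel_I x k = (\<chi> j. x $ k j)"

definition strongly_convex :: "real \<Rightarrow> ('a::real_normed_vector \<Rightarrow> real) \<Rightarrow> bool" where
  "strongly_convex mu f \<longleftrightarrow>
     (\<forall>x y a. 0 \<le> a \<and> a \<le> 1 \<longrightarrow>
        f (a *\<^sub>R x + (1 - a) *\<^sub>R y) \<le> a * f x + (1 - a) * f y - mu / 2 * a * (1 - a) * (norm (x - y))\<^sup>2)"

definition smooth :: "real \<Rightarrow> ('a::real_inner \<Rightarrow> real) \<Rightarrow> bool" where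
  "smooth l f \<longleftrightarrow>
     (\<exists>G. (\<forall>x. (f has_derivative (\<lambda>h. G x \<bullet> h)) (at x)) \<and>
          (\<forall>x y. norm (G x - G y) \<le> l * norm (x - y)))"

primrec foss_x :: "real^'n^'n \<Rightarrow> real^'m^'n \<Rightarrow> ('m \<Rightarrow> 'n) \<Rightarrow> (nat \<Rightarrow> real^'n) \<Rightarrow> nat \<Rightarrow> real^'n" where
  "foss_x A B k xe 0 = 0"
| "foss_x A B k xe (Suc t) =
     A *v foss_x A B k xe t + B *v (sel_I (xe t) k - rows_I A k *v foss_x A B k xe t)"

definition foss_u :: "real^'n^'n \<Rightarrow> real^'m^'n \<Rightarrow> ('m \<Rightarrow> 'n) \<Rightarrow> (nat \<Rightarrow> real^'n) \<Rightarrow> nat \<Rightarrow> real^'m" where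
  "foss_u A B k xe t = sel_I (xe t) k - rows_I A k *v foss_x A B k xe t"

end

theory Submission imports Defs begin

lemma smooth_gap:
  fixes f :: "'a::real_inner \<Rightarrow> real"
  assumes "smooth l f" and mn: "\<forall>x. f th \<le> f x"
  shows "f y - f th \<le> \<bar>l\<bar> * (norm (y - th))\<^sup>2"
proof -
  obtain G where D: "\<And>x. (f has_derivative (\<lambda>h. G x \<bullet> h)) (at x)"
    and L: "\<And>x y. norm (G x - G y) \<le> l * norm (x - y)"
    using assms(1) unfolding smooth_def by blast
  define h where "h = y - th"
  define \<phi> where "\<phi> = (\<lambda>s::real. f (th + s *\<^sub>R h))"
  have Dphi: "(\<phi> has_real_derivative (G (th + s *\<^sub>R h) \<bullet> h)) (at s)" for s
  proof -
    have 1: "((\<lambda>s. th + s *\<^sub>R h) has_derivative (\<lambda>s. s *\<^sub>R h)) (at s)"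
      by (auto intro!: derivative_eq_intros)
    have "((f \<circ> (\<lambda>s. th + s *\<^sub>R h)) has_derivative ((\<lambda>v. G (th + s *\<^sub>R h) \<bullet> v) \<circ> (\<lambda>s. s *\<^sub>R h))) (at s)"
      by (rule diff_chain_at[OF 1 D])
    moreover have "((\<lambda>v. G (th + s *\<^sub>R h) \<bullet> v) \<circ> (\<lambda>s. s *\<^sub>R h)) = (*) (G (th + s *\<^sub>R h) \<bullet> h)"
      by (auto simp: fun_eq_iff)
    ultimately show ?thesis unfolding has_field_derivative_def \<phi>_def by (simp add: o_def)
  qed
  have g0: "G th \<bullet> h = 0"
    using DERIV_local_min[OF Dphi[of 0], of 1] mn by (simp add: \<phi>_def)
  obtain z where z: "0 < z" "z < 1" "\<phi> 1 - \<phi> 0 = (1 - 0) * (G (th + z *\<^sub>R h) \<bullet> h)"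
    using MVT2[of 0 1 \<phi> "\<lambda>s. G (th + s *\<^sub>R h) \<bullet> h"] Dphi by auto
  have "G (th + z *\<^sub>R h) \<bullet> h = (G (th + z *\<^sub>R h) - G th) \<bullet> h"
    using g0 by (simp add: inner_diff_left)
  also have "\<dots> \<le> norm (G (th + z *\<^sub>R h) - G th) * norm h" by (rule norm_cauchy_schwarz)
  also have "\<dots> \<le> (l * norm (z *\<^sub>R h)) * norm h"
    using L[of "th + z *\<^sub>R h" th] by (intro mult_right_mono) auto
  also have "\<dots> = (l * z) * (norm h)\<^sup>2" using z by (simp add: power2_eq_square)
  also have "\<dots> \<le> \<bar>l\<bar> * (norm h)\<^sup>2"
  proof (rule mult_right_mono)
    have "l * z \<le> \<bar>l\<bar> * z" using z by (intro mult_right_mono) auto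
    also have "\<dots> \<le> \<bar>l\<bar>" using z by (simp add: mult_left_le)
    finally show "l * z \<le> \<bar>l\<bar>" .
  qed simp
  finally show ?thesis using z by (simp add: \<phi>_def h_def)
qed

lemma sc_gap:
  fixes f :: "'a::real_normed_vector \<Rightarrow> real"
  assumes "strongly_convex mu f" and mn: "\<forall>x. f th \<le> f x"
  shows "mu / 4 * (norm (y - th))\<^sup>2 \<le> f y - f th"
proof -
  have "f ((1/2) *\<^sub>R y + (1 - 1/2) *\<^sub>R th) \<le> (1/2) * f y + (1 - 1/2) * f th - mu / 2 * (1/2) * (1 - 1/2) * (norm (y - th))\<^sup>2"
    using assms(1) unfolding strongly_convex_def by (erule_tac x=y in allE, erule_tac x=th in allE, erule_tac x="1/2" in allE) simp
  moreover have "f th \<le> f ((1/2) *\<^sub>R y + (1 - 1/2) *\<^sub>R th)" using mn by blast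
  ultimately show ?thesis by simp
qed

lemma cf_Bk:
  assumes "canonical_form A B k"
  shows "(B *v v) $ (k j) = v $ j"
proof -
  have inj: "inj k" using assms unfolding canonical_form_def by (simp add: strict_mono_imp_inj_on)
  have Bij: "B $ i $ j' = (if i = k j' then 1 else 0)" for i j'
  proof -
    have "column j' B $ i = axis (k j') 1 $ i" using assms unfolding canonical_form_def by simp
    thus ?thesis by (simp add: column_def axis_def)
  qed
  have "(B *v v) $ (k j) = (\<Sum>j'\<in>UNIV. (if j' = j then v $ j' else 0))"
    unfolding matrix_vector_mult_def vec_lambda_beta
    using inj by (intro sum.cong) (auto simp: Bij inj_eq)
  thus ?thesis by simp
qed

lemma cf_Bnot:
  assumes "canonical_form A B k" "i \<notin> range k"
  shows "(B *v v) $ i = 0"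
proof -
  have Bij: "B $ i $ j' = (if i = k j' then 1 else 0)" for i j'
  proof -
    have "column j' B $ i = axis (k j') 1 $ i" using assms unfolding canonical_form_def by simp
    thus ?thesis by (simp add: column_def axis_def)
  qed
  show ?thesis unfolding matrix_vector_mult_def using assms(2) by (auto simp: Bij intro!: sum.neutral)
qed

lemma cf_Anot:
  assumes "canonical_form A B k" "i \<notin> range k"
  shows "(A *v x) $ i = x $ (LEAST j. i < j)"
proof -
  have "A $ i = axis (LEAST j. i < j) 1" using assms unfolding canonical_form_def by blast
  thus ?thesis unfolding matrix_vector_mult_def by (simp add: axis_def sum.delta if_distrib[of "\<lambda>c. c * _"] cong: if_cong)
qed

lemma ue_formula:
  assumes "canonical_form A B k" "xe = A *v xe + B *v ue"
  shows "ue = sel_I xe k - rows_I A k *v xe"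
proof -
  have "ue $ j = xe $ k j - (A *v xe) $ k j" for j
    using arg_cong[OF assms(2), of "\<lambda>v. v $ k j"] cf_Bk[OF assms(1)] by simp
  thus ?thesis by (simp add: vec_eq_iff sel_I_def rows_I_def matrix_vector_mult_def)
qed

lemma rows_mv: "(rows_I A k *v x) $ j = (A *v x) $ k j"
  by (simp add: rows_I_def matrix_vector_mult_def)

lemma mv_bound:
  fixes M :: "real^'n^'m"
  assumes "\<And>i. \<bar>v $ i\<bar> \<le> R"
  shows "\<bar>(M *v v) $ j\<bar> \<le> (\<Sum>p\<in>UNIV. \<Sum>q\<in>UNIV. \<bar>M $ p $ q\<bar>) * R"
proof -
  have R0: "0 \<le> R" using assms[of undefined] by linarith
  have "\<bar>(M *v v) $ j\<bar> \<le> (\<Sum>q\<in>UNIV. \<bar>M $ j $ q * v $ q\<bar>)"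
    unfolding matrix_vector_mult_def by (simp add: sum_abs)
  also have "\<dots> \<le> (\<Sum>q\<in>UNIV. \<bar>M $ j $ q\<bar> * R)"
    by (intro sum_mono) (auto simp: abs_mult intro: mult_left_mono assms)
  also have "\<dots> = (\<Sum>q\<in>UNIV. \<bar>M $ j $ q\<bar>) * R" by (simp add: sum_distrib_right)
  also have "\<dots> \<le> (\<Sum>p\<in>UNIV. \<Sum>q\<in>UNIV. \<bar>M $ p $ q\<bar>) * R"
    by (intro mult_right_mono R0 member_le_sum[where f="\<lambda>p. \<Sum>q\<in>UNIV. \<bar>M $ p $ q\<bar>"]) (auto intro: sum_nonneg)
  finally show ?thesis .
qed

lemma norm_bound:
  fixes v :: "real^'n"
  assumes "\<And>i. \<bar>v $ i\<bar> \<le> R"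
  shows "norm v \<le> real CARD('n) * R"
proof -
  have "norm v \<le> (\<Sum>i\<in>UNIV. \<bar>v $ i\<bar>)" by (rule norm_le_l1_cart)
  also have "\<dots> \<le> (\<Sum>i\<in>(UNIV::'n set). R)" by (intro sum_mono assms)
  finally show ?thesis by simp
qed

theorem lemma4:
  fixes A :: "real^('n::{finite,linorder})^('n::{finite,linorder})"
    and B :: "real^('m::{finite,linorder})^('n::{finite,linorder})"
    and k :: "'m \<Rightarrow> 'n"
    and mu_f l_f l_g theta_bar xi_bar :: real
  assumes "canonical_form A B k"
    and "mu_f > 0"
  shows "\<exists>xe_bar ue_bar :: real.
     \<forall>(N::nat) (f :: nat \<Rightarrow> real^('n::{finite,linorder}) \<Rightarrow> real) (g :: nat \<Rightarrow> real^('m::{finite,linorder}) \<Rightarrow> real)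
       (theta :: nat \<Rightarrow> real^('n::{finite,linorder})) (xi :: nat \<Rightarrow> real^('m::{finite,linorder}))
       (xe :: nat \<Rightarrow> real^('n::{finite,linorder})) (ue :: nat \<Rightarrow> real^('m::{finite,linorder})).
       (\<forall>t<N. strongly_convex mu_f (f t) \<and> smooth l_f (f t) \<and>
              convex_on UNIV (g t) \<and> smooth l_g (g t) \<and>
              (\<forall>x. f t (theta t) \<le> f t x) \<and> (\<forall>u. g t (xi t) \<le> g t u) \<and>
              norm (theta t) \<le> theta_bar \<and> norm (xi t) \<le> xi_bar \<and>
              xe t = A *v xe t + B *v ue t \<and>
              (\<forall>x u. x = A *v x + B *v u \<longrightarrow> f t (xe t) + g t (ue t) \<le> f t x + g t u))
       \<longrightarrow> (\<forall>t<N. norm (xe t) \<le> xe_bar \<and> norm (ue t) \<le> ue_bar) \<and>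
           (\<forall>t\<le>N. norm (foss_x A B k xe t) \<le> sqrt (real CARD('n)) * xe_bar) \<and>
           (\<forall>t<N. norm (foss_u A B k xe t) \<le> sqrt (real CARD('n)) * ue_bar)"
proof -
  define K where "K = \<bar>l_f\<bar> * theta_bar\<^sup>2 + \<bar>l_g\<bar> * xi_bar\<^sup>2"
  define R where "R = \<bar>theta_bar\<bar> + sqrt (4 * K / mu_f)"
  define C where "C = (\<Sum>p\<in>UNIV. \<Sum>q\<in>UNIV. \<bar>rows_I A k $ p $ q\<bar>)"
  have cf: "canonical_form A B k" by fact
  have K0: "0 \<le> K" unfolding K_def by simp
  have R0: "0 \<le> R" unfolding R_def using K0 assms(2) by simp
  have C0: "0 \<le> C" unfolding C_def by (intro sum_nonneg) auto
  have sq: "1 \<le> sqrt (real CARD('n))" by simp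
  show ?thesis
  proof (intro exI allI impI)
    fix N :: nat and f :: "nat \<Rightarrow> real^('n::{finite,linorder}) \<Rightarrow> real" and g :: "nat \<Rightarrow> real^('m::{finite,linorder}) \<Rightarrow> real"
      and theta :: "nat \<Rightarrow> real^('n::{finite,linorder})" and xi :: "nat \<Rightarrow> real^('m::{finite,linorder})"
      and xe :: "nat \<Rightarrow> real^('n::{finite,linorder})" and ue :: "nat \<Rightarrow> real^('m::{finite,linorder})"
    assume H: "\<forall>t<N. strongly_convex mu_f (f t) \<and> smooth l_f (f t) \<and>
              convex_on UNIV (g t) \<and> smooth l_g (g t) \<and>
              (\<forall>x. f t (theta t) \<le> f t x) \<and> (\<forall>u. g t (xi t) \<le> g t u) \<and>
              norm (theta t) \<le> theta_bar \<and> norm (xi t) \<le> xi_bar \<and>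
              xe t = A *v xe t + B *v ue t \<and>
              (\<forall>x u. x = A *v x + B *v u \<longrightarrow> f t (xe t) + g t (ue t) \<le> f t x + g t u)"
    have xeR: "norm (xe t) \<le> R" if t: "t < N" for t
    proof -
      have Ht: "strongly_convex mu_f (f t)" "smooth l_f (f t)" "smooth l_g (g t)"
        "\<forall>x. f t (theta t) \<le> f t x" "\<forall>u. g t (xi t) \<le> g t u"
        "norm (theta t) \<le> theta_bar" "norm (xi t) \<le> xi_bar"
        "f t (xe t) + g t (ue t) \<le> f t 0 + g t 0"
        using H t by auto
      have a: "f t 0 - f t (theta t) \<le> \<bar>l_f\<bar> * theta_bar\<^sup>2"
      proof -
        have "f t 0 - f t (theta t) \<le> \<bar>l_f\<bar> * (norm (0 - theta t))\<^sup>2"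
          by (rule smooth_gap[OF Ht(2) Ht(4)])
        also have "\<dots> \<le> \<bar>l_f\<bar> * theta_bar\<^sup>2"
          using Ht(6) by (intro mult_left_mono power_mono) auto
        finally show ?thesis .
      qed
      have b: "g t 0 - g t (xi t) \<le> \<bar>l_g\<bar> * xi_bar\<^sup>2"
      proof -
        have "g t 0 - g t (xi t) \<le> \<bar>l_g\<bar> * (norm (0 - xi t))\<^sup>2"
          by (rule smooth_gap[OF Ht(3) Ht(5)])
        also have "\<dots> \<le> \<bar>l_g\<bar> * xi_bar\<^sup>2"
          using Ht(7) by (intro mult_left_mono power_mono) auto
        finally show ?thesis .
      qed
      have c: "mu_f / 4 * (norm (xe t - theta t))\<^sup>2 \<le> f t (xe t) - f t (theta t)"
        by (rule sc_gap[OF Ht(1) Ht(4)])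
      have "mu_f / 4 * (norm (xe t - theta t))\<^sup>2 \<le> K"
        using a b c Ht(5,8) unfolding K_def by (smt (verit))
      hence "(norm (xe t - theta t))\<^sup>2 \<le> 4 * K / mu_f"
        using assms(2) by (simp add: field_simps)
      hence d: "norm (xe t - theta t) \<le> sqrt (4 * K / mu_f)"
        using real_le_rsqrt by blast
      have "norm (xe t) \<le> norm (theta t) + norm (xe t - theta t)"
        by (metis add.commute diff_add_cancel norm_triangle_ineq)
      thus ?thesis using d Ht(6) unfolding R_def by linarith
    qed
    have xcomp: "\<bar>xe t $ i\<bar> \<le> R" if "t < N" for t i
      using component_le_norm_cart[of "xe t" i] xeR[OF that] by linarith
    have fx: "\<bar>foss_x A B k xe t $ i\<bar> \<le> R" if "t \<le> N" for t i
      using that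
    proof (induction t arbitrary: i)
      case 0 thus ?case using R0 by simp
    next
      case (Suc t)
      show ?case
      proof (cases "i \<in> range k")
        case True
        then obtain j where j: "i = k j" by auto
        have "foss_x A B k xe (Suc t) $ i = (A *v foss_x A B k xe t) $ k j + (sel_I (xe t) k - rows_I A k *v foss_x A B k xe t) $ j"
          using j by (simp only: foss_x.simps vector_add_component cf_Bk[OF cf])
        also have "\<dots> = xe t $ k j" by (simp add: sel_I_def rows_mv)
        finally have "foss_x A B k xe (Suc t) $ i = xe t $ k j" .
        thus ?thesis using xcomp[of t "k j"] Suc.prems by simp
      next
        case False
        have "foss_x A B k xe (Suc t) $ i = foss_x A B k xe t $ (LEAST j. i < j)"
          using False by (simp add: cf_Bnot[OF cf] cf_Anot[OF cf])
        thus ?thesis using Suc by simp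
      qed
    qed
    have ucomp: "\<bar>(sel_I v k - rows_I A k *v w) $ j\<bar> \<le> (1 + C) * R"
      if "\<And>i. \<bar>v $ i\<bar> \<le> R" "\<And>i. \<bar>w $ i\<bar> \<le> R" for v w j
    proof -
      have "\<bar>(rows_I A k *v w) $ j\<bar> \<le> C * R" unfolding C_def by (rule mv_bound) (use that in auto)
      moreover have "\<bar>v $ k j\<bar> \<le> R" using that by auto
      ultimately show ?thesis by (simp add: sel_I_def algebra_simps)
    qed
    show "(\<forall>t<N. norm (xe t) \<le> real CARD('n) * R \<and> norm (ue t) \<le> real CARD('m) * ((1 + C) * R)) \<and>
           (\<forall>t\<le>N. norm (foss_x A B k xe t) \<le> sqrt (real CARD('n)) * (real CARD('n) * R)) \<and>
           (\<forall>t<N. norm (foss_u A B k xe t) \<le> sqrt (real CARD('n)) * (real CARD('m) * ((1 + C) * R)))"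
    proof (intro conjI allI impI)
      fix t assume t: "t < N"
      have "R \<le> real CARD('n) * R" using R0 by (simp add: mult_le_cancel_right1)
      thus "norm (xe t) \<le> real CARD('n) * R" using xeR[OF t] by linarith
      have "ue t = sel_I (xe t) k - rows_I A k *v xe t"
        using H t ue_formula[OF cf] by blast
      thus "norm (ue t) \<le> real CARD('m) * ((1 + C) * R)"
        using ucomp[of "xe t" "xe t"] xcomp[OF t] by (auto intro: norm_bound)
      have "norm (foss_u A B k xe t) \<le> real CARD('m) * ((1 + C) * R)"
        unfolding foss_u_def using ucomp xcomp[OF t] fx[of t] t by (auto intro!: norm_bound)
      moreover have "0 \<le> real CARD('m) * ((1 + C) * R)" using R0 C0 by simp
      ultimately show "norm (foss_u A B k xe t) \<le> sqrt (real CARD('n)) * (real CARD('m) * ((1 + C) * R))"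
        using mult_right_mono[OF sq, of "real CARD('m) * ((1 + C) * R)"] by linarith
    next
      fix t assume t: "t \<le> N"
      have "norm (foss_x A B k xe t) \<le> real CARD('n) * R" using fx[OF t] by (rule norm_bound)
      moreover have "0 \<le> real CARD('n) * R" using R0 by simp
      ultimately show "norm (foss_x A B k xe t) \<le> sqrt (real CARD('n)) * (real CARD('n) * R)"
        using mult_right_mono[OF sq, of "real CARD('n) * R"] by linarith
    qed
  qed
qed

end
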